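(* Let $n\ge 2$ and let $p=(p_1,\dots,p_n)$ be a vector with all $p_i>0$. For $q\in \mathrm{Sim}_n(1)$ define $$OD(q,p)=\sum_{1\le i\le n}\Big((1-q_i)\log(1-q_i) - q_i\log\frac{q_i}{p_i}\Big).$$ (1) For an index $j$, $\max_{q\in\mathrm{Sim}_n(1)} OD(q,p)=\log(p_j)$ if and only if $p_j\ge\sum_{i\ne j}p_i$ (such $j$ is called dominant). If $n\ge 3$ there is at most one dominant index. If there is no dominant index, the maximum of $OD(\cdot,p)$ over $\mathrm{Sim}_n(1)$ is attained in the interior of the simplex. (2) If $p_i=c>0$ for all $i$, then $$\max_{q\in\mathrm{Sim}_n(1)} OD(q,p)=OD\!\left(\tfrac{e}{n},p\right)=(n-1)\log(1-n^{-1})+\log n+\log c.$$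
   Context: $\mathrm{Sim}_n(1)=\{(q_1,\dots,q_n): q_i\ge 0,\ \sum_i q_i=1\}$; $e=(1,\dots,1)$, so $e/n$ is the uniform vector. Conventions: $0\log 0=0$ (i.e. $0^0=1$). *)

theory Defs
  imports Complex_Main
begin

text \<open>Vectors in R^n are modelled as functions nat => real; only indices i < n matter.
  Note: ln 0 = 0 in Isabelle, so x * ln x = 0 at x = 0, matching the convention 0 log 0 = 0.\<close>

definition Sim :: "nat \<Rightarrow> (nat \<Rightarrow> real) set" where
  "Sim n = {q. (\<forall>i<n. q i \<ge> 0) \<and> (\<Sum>i<n. q i) = 1}"

definition OD :: "nat \<Rightarrow> (nat \<Rightarrow> real) \<Rightarrow> (nat \<Rightarrow> real) \<Rightarrow> real" where
  "OD n q p = (\<Sum>i<n. (1 - q i) * ln (1 - q i) - q i * ln (q i / p i))"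

definition dominant :: "nat \<Rightarrow> (nat \<Rightarrow> real) \<Rightarrow> nat \<Rightarrow> bool" where
  "dominant n p j \<longleftrightarrow> j < n \<and> p j \<ge> (\<Sum>i\<in>{..<n} - {j}. p i)"

end

theory Submission imports Defs "HOL-Analysis.Analysis" "HOL-Real_Asymp.Real_Asymp" begin



lemma xlnx_tangent:
  fixes a y :: real assumes a: "a > 0" and y: "y \<ge> 0"
  shows "y * ln y \<ge> a * ln a + (ln a + 1) * (y - a)"
proof (cases "y = 0")
  case True thus ?thesis using a by (simp add: algebra_simps)
next
  case False
  hence yp: "y > 0" using y by simp
  have "ln (a / y) \<le> a / y - 1" using a yp by (intro ln_le_minus_one) simp
  hence "ln a - ln y \<le> a / y - 1" using a yp by (simp add: ln_div)
  hence "y * (ln a - ln y) \<le> y * (a / y - 1)" using yp by (intro mult_left_mono) auto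
  hence "y * ln a - y * ln y \<le> a - y" using yp by (simp add: algebra_simps)
  thus ?thesis by (simp add: algebra_simps)
qed

lemma psi_lower:
  fixes x :: real assumes "0 \<le> x" "x \<le> 1"
  shows "(1 - x) * ln (1 - x) \<ge> - x"
proof (cases "x = 1")
  case True thus ?thesis by simp
next
  case False
  hence p: "1 - x > 0" using assms by simp
  have "ln (1 / (1 - x)) \<le> 1 / (1 - x) - 1" using p by (intro ln_le_minus_one) simp
  hence "- ln (1 - x) \<le> x / (1 - x)" using p by (simp add: ln_div field_simps)
  hence "(1 - x) * (- ln (1 - x)) \<le> (1 - x) * (x / (1 - x))" using p by (intro mult_left_mono) auto
  thus ?thesis using p by simp
qed

lemma ln_one_minus_le: fixes x :: real assumes "x < 1" shows "ln (1 - x) \<le> - x"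
  using ln_le_minus_one[of "1 - x"] assms by simp

lemma xlnx_nonpos: fixes t :: real assumes "0 \<le> t" "t \<le> 1" shows "t * ln t \<le> 0"
proof (cases "t = 0")
  case False
  hence "ln t \<le> 0" using assms by simp
  thus ?thesis using assms mult_nonneg_nonpos by blast
qed simp

lemma psi_superadd2:
  fixes a b :: real assumes a: "a \<ge> 0" and b: "b \<ge> 0" and ab: "a + b \<le> 1"
  shows "(1 - a) * ln (1 - a) + (1 - b) * ln (1 - b) \<le> (1 - (a + b)) * ln (1 - (a + b))"
proof (cases "a + b = 0")
  case True
  hence "a = 0" "b = 0" using a b by linarith+
  thus ?thesis by simp
next
  case False
  hence s: "a + b > 0" using a b by simp
  have key: "(a + b) * (u * ln u) \<le> c * (w * ln w)"
    if c: "c \<ge> 0" "c \<le> 1" and d: "d \<ge> 0" and cd: "c + d = a + b"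
      and u: "u = 1 - c" and w: "w = 1 - (a + b)" for c d u w :: real
  proof (cases "c = 1")
    case True
    hence "d = 0" "a + b = 1" using cd ab d by linarith+
    thus ?thesis using True u w by simp
  next
    case False
    hence up: "u > 0" using u c by simp
    have w0: "w \<ge> 0" using w ab by simp
    have t1: "w * ln w \<ge> u * ln u + (ln u + 1) * (w - u)" by (rule xlnx_tangent[OF up w0])
    have t2: "1 * ln 1 \<ge> u * ln u + (ln u + 1) * (1 - u)" by (rule xlnx_tangent[OF up]) simp
    have "c * (w * ln w) \<ge> c * (u * ln u + (ln u + 1) * (w - u))"
      using t1 c by (intro mult_left_mono) auto
    moreover have "d * 0 \<ge> d * (u * ln u + (ln u + 1) * (1 - u))"
      using t2 d by (intro mult_left_mono) auto
    ultimately have "c * (w * ln w) \<ge> c * (u * ln u + (ln u + 1) * (w - u)) + d * (u * ln u + (ln u + 1) * (1 - u))"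
      by linarith
    also have "c * (u * ln u + (ln u + 1) * (w - u)) + d * (u * ln u + (ln u + 1) * (1 - u))
       = (c + d) * (u * ln u) + (ln u + 1) * (c * (w - u) + d * (1 - u))" by (simp add: algebra_simps)
    also have "c * (w - u) + d * (1 - u) = 0" by (simp add: u w cd[symmetric] algebra_simps)
    finally show ?thesis using cd by simp
  qed
  have "(a + b) * ((1 - a) * ln (1 - a)) \<le> a * ((1 - (a + b)) * ln (1 - (a + b)))"
    by (rule key[of a b]) (use a b ab in auto)
  moreover have "(a + b) * ((1 - b) * ln (1 - b)) \<le> b * ((1 - (a + b)) * ln (1 - (a + b)))"
    by (rule key[of b a]) (use a b ab in auto)
  ultimately have "(a + b) * ((1 - a) * ln (1 - a) + (1 - b) * ln (1 - b)) \<le> (a + b) * ((1 - (a + b)) * ln (1 - (a + b)))"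
    by (simp add: algebra_simps)
  thus ?thesis using s by simp
qed

lemma psi_superadd:
  fixes q :: "nat \<Rightarrow> real"
  assumes "finite F" "\<forall>i\<in>F. q i \<ge> 0" "(\<Sum>i\<in>F. q i) \<le> 1"
  shows "(\<Sum>i\<in>F. (1 - q i) * ln (1 - q i)) \<le> (1 - (\<Sum>i\<in>F. q i)) * ln (1 - (\<Sum>i\<in>F. q i))"
  using assms
proof (induction F rule: finite_induct)
  case empty thus ?case by simp
next
  case (insert a F)
  have s0: "(\<Sum>i\<in>F. q i) \<ge> 0" using insert.prems by (intro sum_nonneg) auto
  have s1: "(\<Sum>i\<in>F. q i) \<le> 1" using insert.prems insert.hyps by auto
  have IH: "(\<Sum>i\<in>F. (1 - q i) * ln (1 - q i)) \<le> (1 - (\<Sum>i\<in>F. q i)) * ln (1 - (\<Sum>i\<in>F. q i))"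
    using insert.IH insert.prems s1 by auto
  have "(\<Sum>i\<in>insert a F. (1 - q i) * ln (1 - q i)) = (1 - q a) * ln (1 - q a) + (\<Sum>i\<in>F. (1 - q i) * ln (1 - q i))"
    using insert.hyps by simp
  also have "\<dots> \<le> (1 - q a) * ln (1 - q a) + (1 - (\<Sum>i\<in>F. q i)) * ln (1 - (\<Sum>i\<in>F. q i))" using IH by simp
  also have "\<dots> \<le> (1 - (q a + (\<Sum>i\<in>F. q i))) * ln (1 - (q a + (\<Sum>i\<in>F. q i)))"
    by (rule psi_superadd2) (use insert s0 in auto)
  finally show ?case using insert.hyps by simp
qed

lemma logsum:
  fixes q p :: "nat \<Rightarrow> real"
  assumes "finite A" "\<forall>i\<in>A. q i \<ge> 0" "\<forall>i\<in>A. p i > 0" "A \<noteq> {}"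
  shows "(\<Sum>i\<in>A. q i * ln (q i / p i)) \<ge> (\<Sum>i\<in>A. q i) * ln ((\<Sum>i\<in>A. q i) / (\<Sum>i\<in>A. p i))"
proof -
  define Q where "Q = (\<Sum>i\<in>A. q i)"
  define P where "P = (\<Sum>i\<in>A. p i)"
  have P: "P > 0" unfolding P_def using assms by (intro sum_pos) auto
  have Q: "Q \<ge> 0" unfolding Q_def using assms by (intro sum_nonneg) auto
  show ?thesis
  proof (cases "Q = 0")
    case True
    hence "\<forall>i\<in>A. q i = 0" using assms unfolding Q_def by (subst (asm) sum_nonneg_eq_0_iff) auto
    thus ?thesis using True unfolding Q_def by simp
  next
    case False
    hence Qp: "Q > 0" using Q by simp
    have tm: "q i * ln (q i / p i) \<ge> q i * ln (Q / P) + q i - p i * Q / P" if i: "i \<in> A" for i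
    proof (cases "q i = 0")
      case True
      have "p i > 0" using assms i by auto
      hence "0 \<le> p i * Q / P" using Qp P by simp
      thus ?thesis using True by simp
    next
      case False
      hence qi: "q i > 0" using assms i by force
      have pi: "p i > 0" using assms i by auto
      have "ln ((p i * Q) / (q i * P)) \<le> (p i * Q) / (q i * P) - 1"
        using qi pi Qp P by (intro ln_le_minus_one) simp
      hence "ln (p i) + ln Q - ln (q i) - ln P \<le> (p i * Q) / (q i * P) - 1"
        using qi pi Qp P by (simp add: ln_div ln_mult)
      hence "q i * (ln (p i) + ln Q - ln (q i) - ln P) \<le> q i * ((p i * Q) / (q i * P) - 1)"
        using qi by (intro mult_left_mono) auto
      hence "q i * (ln (p i) + ln Q - ln (q i) - ln P) \<le> p i * Q / P - q i"
        using qi by (simp add: field_simps)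
      thus ?thesis using qi pi Qp P by (simp add: ln_div algebra_simps)
    qed
    have "(\<Sum>i\<in>A. q i * ln (q i / p i)) \<ge> (\<Sum>i\<in>A. q i * ln (Q / P) + q i - p i * Q / P)"
      by (intro sum_mono tm)
    also have "(\<Sum>i\<in>A. q i * ln (Q / P) + q i - p i * Q / P) = Q * ln (Q / P) + Q - P * Q / P"
      unfolding Q_def P_def by (simp add: sum.distrib sum_subtractf sum_distrib_right sum_divide_distrib)
    also have "\<dots> = Q * ln (Q / P)" using P by simp
    finally show ?thesis unfolding Q_def P_def .
  qed
qed

lemma xlnx_cont: "continuous_on {0..} (\<lambda>x::real. x * ln x)"
proof -
  have lim: "((\<lambda>x::real. x * ln x) \<longlongrightarrow> 0) (at_right 0)" by real_asymp
  show ?thesis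
  proof (clarsimp simp: continuous_on_eq_continuous_within)
    fix x :: real assume x: "0 \<le> x"
    show "continuous (at x within {0..}) (\<lambda>x. x * ln x)"
    proof (cases "x = 0")
      case False
      hence "isCont (\<lambda>x. x * ln x) x" using x by (intro continuous_intros) auto
      thus ?thesis using continuous_at_imp_continuous_at_within by blast
    next
      case True
      have "((\<lambda>x::real. x * ln x) \<longlongrightarrow> 0) (at 0 within {0..})"
        using lim by (simp add: at_within_Ici_at_right)
      thus ?thesis using True by (simp add: continuous_within)
    qed
  qed
qed




lemma Sim_props:
  assumes "q \<in> Sim n" "i < n"
  shows "q i \<ge> 0" "q i \<le> 1"
proof -
  show a: "q i \<ge> 0" using assms unfolding Sim_def by auto
  have "q i \<le> (\<Sum>k<n. q k)"
    using assms unfolding Sim_def by (intro member_le_sum) auto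
  thus "q i \<le> 1" using assms unfolding Sim_def by auto
qed

lemma S_pos:
  fixes p :: "nat \<Rightarrow> real"
  assumes n2: "n \<ge> 2" and ppos: "\<forall>i<n. p i > 0" and j: "j < n"
  shows "(\<Sum>i\<in>{..<n} - {j}. p i) > 0"
proof -
  define k :: nat where "k = (if j = 0 then 1 else 0)"
  have k: "k < n" "k \<noteq> j" using n2 j unfolding k_def by auto
  show ?thesis using k ppos by (intro sum_pos) auto
qed

lemma od_bound:
  assumes n2: "n \<ge> 2" and ppos: "\<forall>i<n. p i > 0" and q: "q \<in> Sim n" and j: "j < n"
  shows "OD n q p \<le> q j * ln (p j) + (1 - q j) * ln (\<Sum>i\<in>{..<n} - {j}. p i)"
proof -
  define A where "A = {..<n} - {j}"
  define S where "S = (\<Sum>i\<in>A. p i)"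
  define x where "x = q j"
  have S: "S > 0" unfolding S_def A_def using S_pos[OF n2 ppos j] .
  have Ane: "A \<noteq> {}" using S unfolding S_def by auto
  have fA: "finite A" unfolding A_def by simp
  have x0: "x \<ge> 0" "x \<le> 1" unfolding x_def using Sim_props[OF q j] by auto
  have qA: "\<forall>i\<in>A. q i \<ge> 0" unfolding A_def using q unfolding Sim_def by auto
  have sq: "(\<Sum>i<n. q i) = 1" using q unfolding Sim_def by auto
  have sumA: "(\<Sum>i\<in>A. q i) = 1 - x"
    using sq sum.remove[of "{..<n}" j q] j unfolding A_def x_def by simp
  have OD_split: "OD n q p = ((1 - x) * ln (1 - x) - x * ln (x / p j))
        + ((\<Sum>i\<in>A. (1 - q i) * ln (1 - q i)) - (\<Sum>i\<in>A. q i * ln (q i / p i)))"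
    unfolding OD_def A_def x_def using j
    by (simp add: sum.remove[of "{..<n}" j] sum_subtractf)
  have s1: "(\<Sum>i\<in>A. (1 - q i) * ln (1 - q i)) \<le> x * ln x"
    using psi_superadd[OF fA qA] sumA x0 by simp
  have s2: "(\<Sum>i\<in>A. q i * ln (q i / p i)) \<ge> (1 - x) * ln ((1 - x) / S)"
    using logsum[OF fA qA _ Ane, of p] ppos sumA unfolding S_def A_def by auto
  have e1: "x * ln x - x * ln (x / p j) = x * ln (p j)"
  proof (cases "x = 0")
    case False
    have "p j > 0" using ppos j by simp
    thus ?thesis using x0 False by (simp add: ln_div algebra_simps)
  qed simp
  have e2: "(1 - x) * ln (1 - x) - (1 - x) * ln ((1 - x) / S) = (1 - x) * ln S"
  proof (cases "x = 1")
    case False thus ?thesis using x0 S by (simp add: ln_div algebra_simps)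
  qed simp
  have "OD n q p \<le> ((1 - x) * ln (1 - x) - x * ln (x / p j)) + (x * ln x - (1 - x) * ln ((1 - x) / S))"
    using OD_split s1 s2 by linarith
  also have "\<dots> = x * ln (p j) + (1 - x) * ln S" using e1 e2 by linarith
  finally show ?thesis unfolding x_def S_def A_def .
qed

lemma od_bdd:
  assumes n2: "n \<ge> 2" and ppos: "\<forall>i<n. p i > 0"
  shows "bdd_above ((\<lambda>q. OD n q p) ` Sim n)"
proof -
  define S where "S = (\<Sum>i\<in>{..<n} - {0}. p i)"
  have "OD n q p \<le> \<bar>ln (p 0)\<bar> + \<bar>ln S\<bar>" if q: "q \<in> Sim n" for q
  proof -
    have j: "0 < n" using n2 by simp
    have b: "0 \<le> q 0" "q 0 \<le> 1" using Sim_props[OF q j] by auto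
    have "q 0 * ln (p 0) \<le> \<bar>ln (p 0)\<bar>"
    proof -
      have "q 0 * ln (p 0) \<le> q 0 * \<bar>ln (p 0)\<bar>" using b by (intro mult_left_mono) auto
      also have "\<dots> \<le> 1 * \<bar>ln (p 0)\<bar>" using b by (intro mult_right_mono) auto
      finally show ?thesis by simp
    qed
    moreover have "(1 - q 0) * ln S \<le> \<bar>ln S\<bar>"
    proof -
      have "(1 - q 0) * ln S \<le> (1 - q 0) * \<bar>ln S\<bar>" using b by (intro mult_left_mono) auto
      also have "\<dots> \<le> 1 * \<bar>ln S\<bar>" using b by (intro mult_right_mono) auto
      finally show ?thesis by simp
    qed
    ultimately show ?thesis using od_bound[OF n2 ppos q j] unfolding S_def by linarith
  qed
  thus ?thesis by (intro bdd_aboveI2) 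
qed

definition vtx :: "nat \<Rightarrow> nat \<Rightarrow> real" where "vtx j = (\<lambda>i. if i = j then 1 else 0)"

lemma vtx_Sim: "j < n \<Longrightarrow> vtx j \<in> Sim n"
  unfolding Sim_def vtx_def by (auto simp: sum.delta)

lemma vtx_OD: assumes "j < n" "p j > 0" shows "OD n (vtx j) p = ln (p j)"
proof -
  have "OD n (vtx j) p = (\<Sum>i<n. if i = j then ln (p j) else 0)"
    unfolding OD_def vtx_def using assms by (intro sum.cong) (auto simp: ln_div)
  thus ?thesis using assms by (simp add: sum.delta)
qed




lemma beat_vertex:
  fixes p :: "nat \<Rightarrow> real"
  assumes n2: "n \<ge> 2" and ppos: "\<forall>i<n. p i > 0" and j: "j < n"
    and nd: "(\<Sum>i\<in>{..<n} - {j}. p i) > p j"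
  shows "\<exists>q\<in>Sim n. OD n q p > ln (p j)"
proof -
  define A where "A = {..<n} - {j}"
  define S where "S = (\<Sum>i\<in>A. p i)"
  have S: "S > 0" unfolding S_def A_def using S_pos[OF n2 ppos j] .
  have pj: "p j > 0" using ppos j by simp
  define L where "L = ln S - ln (p j)"
  have L: "L > 0" unfolding L_def using nd pj unfolding S_def A_def by simp
  define e where "e = min (1/2) (L/2)"
  have e: "e > 0" "e \<le> 1/2" "e \<le> L/2" unfolding e_def using L by auto
  define q where "q = (\<lambda>i. if i = j then 1 - e else e * p i / S)"
  have fA: "finite A" unfolding A_def by simp
  have jA: "j \<notin> A" unfolding A_def by simp
  have sumA: "(\<Sum>i\<in>A. q i) = e"
  proof -
    have "(\<Sum>i\<in>A. q i) = (\<Sum>i\<in>A. e * p i / S)" unfolding q_def using jA by (intro sum.cong) auto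
    also have "\<dots> = e * S / S" unfolding S_def by (simp add: sum_divide_distrib[symmetric] sum_distrib_left)
    finally show ?thesis using S by simp
  qed
  have split: "(\<Sum>i<n. f i) = f j + (\<Sum>i\<in>A. f i)" for f :: "nat \<Rightarrow> real"
    unfolding A_def using j by (simp add: sum.remove[of "{..<n}" j])
  have qS: "q \<in> Sim n"
  proof -
    have "\<forall>i<n. q i \<ge> 0" unfolding q_def using e ppos S by auto
    moreover have "(\<Sum>i<n. q i) = 1" using split[of q] sumA unfolding q_def by simp
    ultimately show ?thesis unfolding Sim_def by simp
  qed
  have Tj: "(1 - q j) * ln (1 - q j) - q j * ln (q j / p j) = e * ln e - (1 - e) * ln (1 - e) + (1 - e) * ln (p j)"
    unfolding q_def using e pj by (simp add: ln_div algebra_simps)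
  have Ti: "(1 - q i) * ln (1 - q i) - q i * ln (q i / p i) \<ge> - (e * p i / S) * (1 + ln e - ln S)"
    if i: "i \<in> A" for i
  proof -
    have ij: "i \<noteq> j" "i < n" using i unfolding A_def by auto
    have pi: "p i > 0" using ppos ij by simp
    have qi: "q i = e * p i / S" using ij unfolding q_def by simp
    have qi0: "q i \<ge> 0" "q i \<le> 1" using Sim_props[OF qS ij(2)] by auto
    have "q i / p i = e / S" using qi pi by simp
    hence "q i * ln (q i / p i) = q i * (ln e - ln S)" using e S by (simp add: ln_div)
    moreover have "(1 - q i) * ln (1 - q i) \<ge> - q i" using psi_lower qi0 by simp
    ultimately have "(1 - q i) * ln (1 - q i) - q i * ln (q i / p i) \<ge> - q i - q i * (ln e - ln S)" by linarith
    moreover have "- (e * p i / S) * (1 + ln e - ln S) = - q i - q i * (ln e - ln S)"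
      unfolding qi using S by (simp add: field_simps)
    ultimately show ?thesis by linarith
  qed
  have "(\<Sum>i\<in>A. (1 - q i) * ln (1 - q i) - q i * ln (q i / p i)) \<ge> (\<Sum>i\<in>A. - (e * p i / S) * (1 + ln e - ln S))"
    by (intro sum_mono Ti)
  also have "(\<Sum>i\<in>A. - (e * p i / S) * (1 + ln e - ln S)) = (\<Sum>i\<in>A. p i * (- e * (1 + ln e - ln S) / S))"
    using S by (intro sum.cong) (auto simp: field_simps)
  also have "\<dots> = (\<Sum>i\<in>A. p i) * (- e * (1 + ln e - ln S) / S)"
    by (rule sum_distrib_right[symmetric])
  also have "(\<Sum>i\<in>A. p i) = S" by (simp add: S_def)
  also have "S * (- e * (1 + ln e - ln S) / S) = - e * (1 + ln e - ln S)" using S by simp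
  finally have sA: "(\<Sum>i\<in>A. (1 - q i) * ln (1 - q i) - q i * ln (q i / p i)) \<ge> - e * (1 + ln e - ln S)" .
  have OD: "OD n q p \<ge> e * ln e - (1 - e) * ln (1 - e) + (1 - e) * ln (p j) - e * (1 + ln e - ln S)"
    unfolding OD_def using split[of "\<lambda>i. (1 - q i) * ln (1 - q i) - q i * ln (q i / p i)"] Tj sA by linarith
  have "ln (1 - e) \<le> - e" using e by (intro ln_one_minus_le) simp
  hence "(1 - e) * ln (1 - e) \<le> (1 - e) * (- e)" using e by (intro mult_left_mono) auto
  hence "OD n q p \<ge> ln (p j) + e * (L - e)" using OD unfolding L_def by (simp add: algebra_simps)
  moreover have "e * (L - e) > 0" using e by (intro mult_pos_pos) auto
  ultimately show ?thesis using qS by force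
qed

lemma perturb:
  fixes p q :: "nat \<Rightarrow> real"
  assumes ppos: "\<forall>i<n. p i > 0" and qS: "q \<in> Sim n" and k: "k < n" "q k = 0"
    and m: "m < n" "0 < q m" "q m < 1"
  shows "\<exists>q'\<in>Sim n. OD n q' p > OD n q p"
proof -
  have km: "k \<noteq> m" using k m by auto
  define C where "C = 1 + ln (p k) + ln (1 - q m) + ln (q m / 2) - ln (p m)"
  define e where "e = min (q m / 2) (exp C / 2)"
  have e: "e > 0" "e \<le> q m / 2" "e \<le> exp C / 2" unfolding e_def using m by auto
  have lne: "ln e < C"
  proof -
    have "ln e \<le> ln (exp C / 2)" using e by simp
    also have "\<dots> = C - ln 2" by (simp add: ln_div)
    finally have "ln e \<le> C - ln 2" .
    moreover have "ln (2::real) > 0" by simp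
    ultimately show ?thesis by linarith
  qed
  define q' where "q' = q(k := e, m := q m - e)"
  have pk: "p k > 0" and pm: "p m > 0" using ppos k m by auto
  define T where "T = (\<lambda>i t. (1 - t) * ln (1 - t) - t * ln (t / p i))"
  have diff: "OD n q' p - OD n q p = (T k e - T k 0) + (T m (q m - e) - T m (q m))"
  proof -
    have "OD n q' p - OD n q p = (\<Sum>i<n. T i (q' i) - T i (q i))"
      unfolding OD_def T_def by (simp add: sum_subtractf)
    also have "\<dots> = (\<Sum>i\<in>{k, m}. T i (q' i) - T i (q i))"
      by (rule sum.mono_neutral_right) (use k m in \<open>auto simp: q'_def\<close>)
    also have "\<dots> = (T k e - T k 0) + (T m (q m - e) - T m (q m))"
      using km k unfolding q'_def by simp
    finally show ?thesis .
  qed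
  have Tk: "T k e - T k 0 \<ge> - e - e * ln e + e * ln (p k)"
  proof -
    have "(1 - e) * ln (1 - e) \<ge> - e" using psi_lower e m by simp
    moreover have "e * ln (e / p k) = e * ln e - e * ln (p k)" using e pk by (simp add: ln_div algebra_simps)
    ultimately show ?thesis unfolding T_def by simp
  qed
  have Tm: "T m (q m - e) - T m (q m) \<ge> e * (ln (1 - q m) + 1) + e * (ln (q m / 2) + 1) - e * ln (p m)"
  proof -
    have a1: "(1 - (q m - e)) * ln (1 - (q m - e)) \<ge> (1 - q m) * ln (1 - q m) + (ln (1 - q m) + 1) * e"
      using xlnx_tangent[of "1 - q m" "1 - (q m - e)"] m e by (simp add: algebra_simps)
    have pos: "q m - e > 0" using e m by simp
    have a2: "q m * ln (q m) \<ge> (q m - e) * ln (q m - e) + (ln (q m - e) + 1) * e"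
      using xlnx_tangent[of "q m - e" "q m"] pos m by (simp add: algebra_simps)
    have a3: "ln (q m - e) \<ge> ln (q m / 2)" using e m by simp
    have a3': "(ln (q m - e) + 1) * e \<ge> (ln (q m / 2) + 1) * e" using a3 e by (intro mult_right_mono) auto
    have b1: "(q m - e) * ln ((q m - e) / p m) = (q m - e) * ln (q m - e) - (q m - e) * ln (p m)"
      using pos pm by (simp add: ln_div algebra_simps)
    have b2: "q m * ln (q m / p m) = q m * ln (q m) - q m * ln (p m)"
      using m pm by (simp add: ln_div algebra_simps)
    show ?thesis unfolding T_def using a1 a2 a3' b1 b2 by (simp add: algebra_simps)
  qed
  have "OD n q' p - OD n q p \<ge> e * (C - ln e)"
    using diff Tk Tm unfolding C_def by (simp add: algebra_simps)
  moreover have "e * (C - ln e) > 0" using e lne by simp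
  moreover have "q' \<in> Sim n"
  proof -
    have "\<forall>i<n. q' i \<ge> 0" using qS e unfolding q'_def Sim_def by auto
    moreover have "(\<Sum>i<n. q' i) = (\<Sum>i<n. q i)"
    proof -
      have "(\<Sum>i<n. q' i - q i) = (\<Sum>i\<in>{k, m}. q' i - q i)"
        by (rule sum.mono_neutral_right) (use k m in \<open>auto simp: q'_def\<close>)
      also have "\<dots> = 0" using km k unfolding q'_def by simp
      finally show ?thesis by (simp add: sum_subtractf)
    qed
    ultimately show ?thesis using qS unfolding Sim_def by simp
  qed
  ultimately show ?thesis by force
qed




definition Kset :: "nat \<Rightarrow> (nat \<Rightarrow> real) set" where
  "Kset n = PiE UNIV (\<lambda>i. if i < n then {0..1} else {0}) \<inter> {q. (\<Sum>i<n. q i) = 1}"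

lemma Kset_compact: "compact (Kset n)"
proof -
  have c1: "compact (PiE UNIV (\<lambda>i. if i < n then {0..1::real} else {0}))"
  proof -
    have "compactin (product_topology (\<lambda>i. euclidean) UNIV) (PiE UNIV (\<lambda>i. if i < n then {0..1::real} else {0}))"
      by (subst compactin_PiE) auto
    thus ?thesis by (simp add: euclidean_product_topology)
  qed
  have c2: "closed {q::nat\<Rightarrow>real. (\<Sum>i<n. q i) = 1}"
    by (intro closed_Collect_eq continuous_on_sum continuous_on_product_coordinates continuous_on_const)
  show ?thesis unfolding Kset_def using c1 c2 by (rule compact_Int_closed)
qed

lemma Kset_Sim: "Kset n \<subseteq> Sim n"
proof
  fix q assume q: "q \<in> Kset n"
  have "q i \<ge> 0" if i: "i < n" for i
  proof -
    have "q i \<in> (if i < n then {0..1} else {0})" using q unfolding Kset_def by (auto simp: PiE_iff)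
    thus ?thesis using i by simp
  qed
  thus "q \<in> Sim n" using q unfolding Kset_def Sim_def by auto
qed

lemma vtx_Kset: "0 < n \<Longrightarrow> vtx 0 \<in> Kset n"
  unfolding Kset_def vtx_def by (auto simp: PiE_iff sum.delta)

definition trunc :: "nat \<Rightarrow> (nat \<Rightarrow> real) \<Rightarrow> nat \<Rightarrow> real" where
  "trunc n q = (\<lambda>i. if i < n then q i else 0)"

lemma trunc_K: "q \<in> Sim n \<Longrightarrow> trunc n q \<in> Kset n"
  unfolding Kset_def trunc_def using Sim_props[of q n]
  by (auto simp: PiE_iff Sim_def)

lemma trunc_OD: "OD n (trunc n q) p = OD n q p"
  unfolding OD_def trunc_def by (intro sum.cong) auto

lemma OD_cont:
  assumes ppos: "\<forall>i<n. p i > 0"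
  shows "continuous_on (Kset n) (\<lambda>q. OD n q p)"
proof -
  have eq: "OD n q p = (\<Sum>i<n. (1 - q i) * ln (1 - q i) - q i * ln (q i) + q i * ln (p i))"
    if q: "q \<in> Kset n" for q
    unfolding OD_def
  proof (intro sum.cong refl)
    fix i assume i: "i \<in> {..<n}"
    have "q i \<ge> 0" using Sim_props[of q n i] Kset_Sim q i by auto
    moreover have "p i > 0" using ppos i by auto
    ultimately show "(1 - q i) * ln (1 - q i) - q i * ln (q i / p i) = (1 - q i) * ln (1 - q i) - q i * ln (q i) + q i * ln (p i)"
      by (cases "q i = 0") (auto simp: ln_div algebra_simps)
  qed
  have rng: "q i \<in> {0..1}" if "q \<in> Kset n" "i < n" for q i
    using Sim_props[of q n i] Kset_Sim that by auto
  have ci: "continuous_on (Kset n) (\<lambda>q. q i)" for i :: nat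
    by (rule continuous_on_subset[OF continuous_on_product_coordinates]) simp
  have "continuous_on (Kset n) (\<lambda>q. \<Sum>i<n. (1 - q i) * ln (1 - q i) - q i * ln (q i) + q i * ln (p i))"
  proof (intro continuous_on_sum)
    fix i assume i: "i \<in> {..<n}"
    have c1: "continuous_on (Kset n) (\<lambda>q. (1 - q i) * ln (1 - q i))"
    proof (rule continuous_on_compose2[OF xlnx_cont, of _ "\<lambda>q. 1 - q i"])
      show "continuous_on (Kset n) (\<lambda>q. 1 - q i)" by (intro continuous_on_diff continuous_on_const ci)
      show "(\<lambda>q. 1 - q i) ` Kset n \<subseteq> {0..}" using rng i by fastforce
    qed
    have c2: "continuous_on (Kset n) (\<lambda>q. q i * ln (q i))"
    proof (rule continuous_on_compose2[OF xlnx_cont, of _ "\<lambda>q. q i"])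
      show "continuous_on (Kset n) (\<lambda>q. q i)" by (rule ci)
      show "(\<lambda>q. q i) ` Kset n \<subseteq> {0..}" using rng i by fastforce
    qed
    show "continuous_on (Kset n) (\<lambda>q. (1 - q i) * ln (1 - q i) - q i * ln (q i) + q i * ln (p i))"
      by (intro continuous_on_add continuous_on_diff c1 c2 continuous_on_mult continuous_on_const ci)
  qed
  thus ?thesis by (rule continuous_on_eq) (simp add: eq)
qed

lemma exists_max:
  assumes n2: "n \<ge> 2" and ppos: "\<forall>i<n. p i > 0"
  shows "\<exists>q\<in>Sim n. \<forall>q'\<in>Sim n. OD n q' p \<le> OD n q p"
proof -
  have ne: "Kset n \<noteq> {}" using vtx_Kset[of n] n2 by auto
  obtain q where q: "q \<in> Kset n" "\<forall>y\<in>Kset n. OD n y p \<le> OD n q p"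
    using continuous_attains_sup[OF Kset_compact ne OD_cont[OF ppos]] by blast
  show ?thesis
  proof (intro bexI ballI)
    fix q' assume "q' \<in> Sim n"
    hence "OD n (trunc n q') p \<le> OD n q p" using q trunc_K by blast
    thus "OD n q' p \<le> OD n q p" by (simp add: trunc_OD)
  qed (use q Kset_Sim in auto)
qed

lemma interior_max:
  fixes p :: "nat \<Rightarrow> real"
  assumes n2: "n \<ge> 2" and ppos: "\<forall>i<n. p i > 0" and nd: "\<not> (\<exists>j. dominant n p j)"
  shows "\<exists>q\<in>Sim n. (\<forall>i<n. q i > 0) \<and> (\<forall>q'\<in>Sim n. OD n q' p \<le> OD n q p)"
proof -
  obtain q where q: "q \<in> Sim n" "\<forall>q'\<in>Sim n. OD n q' p \<le> OD n q p"
    using exists_max[OF n2 ppos] by blast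
  have "\<forall>i<n. q i > 0"
  proof (rule ccontr)
    assume "\<not> (\<forall>i<n. q i > 0)"
    then obtain k where k0: "k < n" "\<not> q k > 0" by blast
    have k: "k < n" "q k = 0" using k0 Sim_props[OF q(1) k0(1)] by auto
    show False
    proof (cases "\<exists>m<n. 0 < q m \<and> q m < 1")
      case True
      then obtain m where m: "m < n" "0 < q m" "q m < 1" by blast
      obtain q' where q': "q' \<in> Sim n" "OD n q' p > OD n q p"
        using perturb[OF ppos q(1) k m] by blast
      have "OD n q' p \<le> OD n q p" using q(2) q'(1) by blast
      thus False using q'(2) by linarith
    next
      case False
      have "\<exists>j<n. q j = 1"
      proof (rule ccontr)
        assume nj: "\<not> (\<exists>j<n. q j = 1)"
        have "q i = 0" if i: "i < n" for i
        proof -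
          have "q i \<ge> 0" "q i \<le> 1" using Sim_props[OF q(1) i] by auto
          moreover have "\<not> (0 < q i \<and> q i < 1)" using False i by blast
          moreover have "q i \<noteq> 1" using nj i by blast
          ultimately show ?thesis by linarith
        qed
        hence "(\<Sum>i<n. q i) = 0" by simp
        thus False using q(1) unfolding Sim_def by simp
      qed
      then obtain j where j: "j < n" "q j = 1" by blast
      have "OD n q p \<le> 1 * ln (p j) + (1 - 1) * ln (\<Sum>i\<in>{..<n} - {j}. p i)"
        using od_bound[OF n2 ppos q(1) j(1)] j(2) by simp
      hence le: "OD n q p \<le> ln (p j)" by simp
      have "\<not> dominant n p j" using nd by blast
      hence "(\<Sum>i\<in>{..<n} - {j}. p i) > p j" using j(1) unfolding dominant_def by linarith
      from beat_vertex[OF n2 ppos j(1) this] obtain q' where q': "q' \<in> Sim n" "OD n q' p > ln (p j)" by blast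
      have "OD n q' p \<le> OD n q p" using q(2) q'(1) by blast
      thus False using q'(2) le by linarith
    qed
  qed
  thus ?thesis using q by blast
qed




definition gg :: "real \<Rightarrow> real" where "gg t = (1 - t) * ln (1 - t) - t * ln t"
definition gd :: "real \<Rightarrow> real" where "gd t = - ln (1 - t) - ln t - 2"

lemma gg_deriv: assumes "0 < t" "t < 1" shows "(gg has_real_derivative gd t) (at t)"
proof -
  have "((\<lambda>t. (1 - t) * ln (1 - t) - t * ln t) has_real_derivative
          ((-1) * ln (1 - t) + (1 - t) * ((-1) / (1 - t)) - (1 * ln t + t * (1 / t)))) (at t)"
    using assms by (auto intro!: derivative_eq_intros)
  moreover have "(-1) * ln (1 - t) + (1 - t) * ((-1) / (1 - t)) - (1 * ln t + t * (1 / t)) = gd t"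
    using assms unfolding gd_def by (simp add: field_simps)
  ultimately show ?thesis unfolding gg_def[abs_def] by simp
qed

lemma gd_mono:
  assumes "0 < s" "s \<le> a" "a + s \<le> 1" "a < 1"
  shows "gd a \<le> gd s"
proof -
  have s1: "s < 1" using assms by simp
  have "s * (1 - s) \<le> a * (1 - a)"
  proof -
    have "a * (1 - a) - s * (1 - s) = (a - s) * (1 - a - s)" by (simp add: algebra_simps)
    moreover have "(a - s) * (1 - a - s) \<ge> 0" using assms by (intro mult_nonneg_nonneg) auto
    ultimately show ?thesis by linarith
  qed
  hence "ln (s * (1 - s)) \<le> ln (a * (1 - a))" using assms s1 by (intro ln_mono) auto
  hence "ln s + ln (1 - s) \<le> ln a + ln (1 - a)" using assms s1 by (simp add: ln_mult)
  thus ?thesis unfolding gd_def by simp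
qed

lemma gg0: "gg 0 = 0" and gg1: "gg 1 = 0" and gghalf: "gg (1/2) = 0"
  unfolding gg_def by simp_all

lemma gg_tangent:
  assumes a: "0 < a" "a \<le> 1/2" and t: "0 \<le> t" "t \<le> 1/2"
  shows "gg t \<le> gg a + gd a * (t - a)"
proof -
  define h where "h = (\<lambda>s. gg a + gd a * (s - a) - gg s)"
  have ha: "h a = 0" unfolding h_def by simp
  have hd: "(h has_real_derivative (gd a - gd s)) (at s)" if "0 < s" "s < 1" for s
    unfolding h_def using that by (auto intro!: derivative_eq_intros gg_deriv)
  have "h t \<ge> 0"
  proof (cases "t = 0")
    case True
    have "h 0 = ln (1 - a) + 2 * a"
      unfolding h_def gg_def gd_def by (simp add: algebra_simps)
    moreover have "ln (1 - a) \<ge> - 2 * a"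
    proof -
      have p: "1 - a > 0" using a by simp
      have "(1 - a) * ln (1 - a) \<ge> - a" using psi_lower a by simp
      hence "ln (1 - a) \<ge> - a / (1 - a)" using p by (simp add: field_simps)
      moreover have "- a / (1 - a) \<ge> - 2 * a"
      proof -
        have "a / (1 - a) \<le> 2 * a" using a p by (simp add: field_simps)
        thus ?thesis by simp
      qed
      ultimately show ?thesis by linarith
    qed
    ultimately show ?thesis using True by simp
  next
    case False
    hence tp: "t > 0" using t by simp
    show ?thesis
    proof (cases "t \<le> a")
      case True
      have "h a \<le> h t"
      proof (rule DERIV_nonpos_imp_nonincreasing[OF True])
        fix x assume x: "t \<le> x" "x \<le> a"
        show "\<exists>y. DERIV h x :> y \<and> y \<le> 0"
          using hd[of x] gd_mono[of x a] x tp a by auto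
      qed
      thus ?thesis using ha by simp
    next
      case False
      hence at: "a \<le> t" by simp
      have "h a \<le> h t"
      proof (rule DERIV_nonneg_imp_nondecreasing[OF at])
        fix x assume x: "a \<le> x" "x \<le> t"
        show "\<exists>y. DERIV h x :> y \<and> y \<ge> 0"
          using hd[of x] gd_mono[of a x] x t a by auto
      qed
      thus ?thesis using ha by simp
    qed
  qed
  thus ?thesis unfolding h_def by simp
qed

lemma gg_nonneg: assumes "0 < a" "a \<le> 1/2" shows "gg a \<ge> 0"
proof -
  have t0: "0 \<le> gg a - gd a * a" using gg_tangent[of a 0] assms gg0 by simp
  have t1: "0 \<le> gg a + gd a * (1/2 - a)" using gg_tangent[of a "1/2"] assms gghalf by simp
  have m1: "0 \<le> (1/2 - a) * (gg a - gd a * a)" using t0 assms by (intro mult_nonneg_nonneg) auto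
  have m2: "0 \<le> a * (gg a + gd a * (1/2 - a))" using t1 assms by (intro mult_nonneg_nonneg) auto
  have "0 \<le> (1/2 - a) * (gg a - gd a * a) + a * (gg a + gd a * (1/2 - a))"
    using m1 m2 by linarith
  also have "\<dots> = gg a / 2" by (simp add: algebra_simps)
  finally show ?thesis by simp
qed

lemma F_mono:
  fixes N x :: real
  assumes N: "N \<ge> 2" and x: "1/2 \<le> x" "x < 1"
  shows "gg x + (N - 1) * gg ((1 - x) / (N - 1)) \<le> gg (1/2) + (N - 1) * gg ((1 - 1/2) / (N - 1))"
proof -
  define h where "h = (\<lambda>s. gg s + (N - 1) * gg ((1 - s) / (N - 1)))"
  have "h x \<le> h (1/2)"
  proof (rule DERIV_nonpos_imp_nonincreasing[OF x(1)])
    fix s assume s: "1/2 \<le> s" "s \<le> x"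
    define y where "y = (1 - s) / (N - 1)"
    have s1: "0 < s" "s < 1" using s x by auto
    have m: "(N - 2) * (1 - s) \<ge> 0" using s1 N by (intro mult_nonneg_nonneg) auto
    have y0: "0 < y" unfolding y_def using s1 N by simp
    have y1: "y \<le> 1 - s" unfolding y_def using N m by (subst pos_divide_le_eq) (auto simp: algebra_simps)
    note y = y0 y1
    have yl1: "y < 1" using y s1 by simp
    have d1: "DERIV (\<lambda>s. (1 - s) / (N - 1)) s :> (-1 / (N - 1))"
    proof -
      have nz: "N - 1 \<noteq> 0" using N by simp
      have "DERIV (\<lambda>s. (1 - s) / (N - 1)) s :> (0 - 1) / (N - 1)"
        by (intro DERIV_cdivide DERIV_diff DERIV_const DERIV_ident)
      thus ?thesis by simp
    qed
    have d2: "DERIV (\<lambda>s. gg ((1 - s) / (N - 1))) s :> gd y * (-1 / (N - 1))"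
    proof -
      have gdy: "DERIV gg ((1 - s) / (N - 1)) :> gd y" using gg_deriv[OF y(1) yl1] unfolding y_def .
      show ?thesis using DERIV_chain2[OF gdy d1] by simp
    qed
    have "DERIV h s :> gd s + (N - 1) * (gd y * (-1 / (N - 1)))"
      unfolding h_def by (rule DERIV_add[OF gg_deriv[OF s1] DERIV_cmult[OF d2]])
    moreover have "gd s + (N - 1) * (gd y * (-1 / (N - 1))) = gd s - gd y" using N by simp
    moreover have "gd s \<le> gd y" using gd_mono[of y s] y s1 s by auto
    ultimately show "\<exists>y. DERIV h s :> y \<and> y \<le> 0" by auto
  qed
  thus ?thesis unfolding h_def by simp
qed




lemma uniform_ineq:
  assumes n2: "n \<ge> 2" and q: "q \<in> Sim n"
  shows "(\<Sum>i<n. gg (q i)) \<le> real n * gg (1 / real n)"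
proof -
  define N where "N = real n"
  define a where "a = 1 / N"
  have N: "N \<ge> 2" unfolding N_def using n2 by simp
  have a: "0 < a" "a \<le> 1/2" unfolding a_def using N by (auto simp: field_simps)
  have sq: "(\<Sum>i<n. q i) = 1" using q unfolding Sim_def by simp
  have qb: "0 \<le> q i" "q i \<le> 1" if "i < n" for i using Sim_props[OF q that] by auto
  show ?thesis
  proof (cases "\<exists>j<n. q j > 1/2")
    case False
    have "(\<Sum>i<n. gg (q i)) \<le> (\<Sum>i<n. gg a + gd a * (q i - a))"
      using False qb a by (intro sum_mono gg_tangent) auto
    also have "\<dots> = N * gg a + gd a * (1 - N * a)"
      unfolding N_def by (simp add: sum.distrib sum_distrib_left[symmetric] sum_subtractf sq algebra_simps)
    also have "N * a = 1" unfolding a_def using N by simp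
    finally show ?thesis unfolding N_def a_def by simp
  next
    case True
    then obtain j where j: "j < n" "q j > 1/2" by blast
    define x where "x = q j"
    define A where "A = {..<n} - {j}"
    have fA: "finite A" unfolding A_def by simp
    have split: "(\<Sum>i<n. f i) = f j + (\<Sum>i\<in>A. f i)" for f :: "nat \<Rightarrow> real"
      unfolding A_def using j by (simp add: sum.remove[of "{..<n}" j])
    have sumA: "(\<Sum>i\<in>A. q i) = 1 - x" using split[of q] sq unfolding x_def by simp
    have qA: "0 \<le> q i" "q i \<le> 1 - x" if "i \<in> A" for i
    proof -
      show "0 \<le> q i" using qb that unfolding A_def by auto
      have "q i \<le> (\<Sum>i\<in>A. q i)" using fA that qb unfolding A_def by (intro member_le_sum) auto
      thus "q i \<le> 1 - x" using sumA by simp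
    qed
    have cardA: "real (card A) = N - 1" unfolding A_def N_def using j by (simp add: of_nat_diff)
    have x: "1/2 < x" "x \<le> 1" unfolding x_def using j qb by auto
    show ?thesis
    proof (cases "x = 1")
      case True
      have "\<forall>i\<in>A. q i = 0" using qA True by force
      hence "(\<Sum>i<n. gg (q i)) = 0" using split[of "\<lambda>i. gg (q i)"] True gg0 gg1 unfolding x_def by simp
      moreover have "gg a \<ge> 0" using gg_nonneg a by simp
      ultimately show ?thesis using N unfolding N_def a_def by simp
    next
      case False
      hence x1: "x < 1" using x by simp
      define y where "y = (1 - x) / (N - 1)"
      have y: "0 < y" "y \<le> 1/2" unfolding y_def using x1 x N by (auto simp: field_simps)
      have "(\<Sum>i\<in>A. gg (q i)) \<le> (\<Sum>i\<in>A. gg y + gd y * (q i - y))"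
      proof (intro sum_mono gg_tangent)
        fix i assume i: "i \<in> A"
        show "0 \<le> q i" using qA(1)[OF i] .
        show "q i \<le> 1/2" using qA(2)[OF i] x by linarith
      qed (use y in auto)
      also have "\<dots> = (N - 1) * gg y + gd y * ((1 - x) - (N - 1) * y)"
        by (simp add: sum.distrib sum_distrib_left[symmetric] sum_subtractf sumA cardA algebra_simps)
      also have "(N - 1) * y = 1 - x" unfolding y_def using N by simp
      finally have sA: "(\<Sum>i\<in>A. gg (q i)) \<le> (N - 1) * gg y" by simp
      have "(\<Sum>i<n. gg (q i)) \<le> gg x + (N - 1) * gg ((1 - x) / (N - 1))"
        using split[of "\<lambda>i. gg (q i)"] sA unfolding x_def y_def by simp
      also have "\<dots> \<le> gg (1/2) + (N - 1) * gg ((1 - 1/2) / (N - 1))"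
        using F_mono[OF N] x x1 by simp
      also have "\<dots> \<le> N * gg a"
      proof -
        define y0 where "y0 = (1 - 1/2) / (N - 1)"
        have y0: "0 \<le> y0" "y0 \<le> 1/2" unfolding y0_def using N by (auto simp: field_simps)
        have t1: "gg (1/2) \<le> gg a + gd a * (1/2 - a)" using gg_tangent a by simp
        have t2: "gg y0 \<le> gg a + gd a * (y0 - a)" using gg_tangent a y0 by simp
        have "(N - 1) * gg y0 \<le> (N - 1) * (gg a + gd a * (y0 - a))" using t2 N by (intro mult_left_mono) auto
        hence "gg (1/2) + (N - 1) * gg y0 \<le> gg a + gd a * (1/2 - a) + (N - 1) * (gg a + gd a * (y0 - a))"
          using t1 by linarith
        also have "\<dots> = N * gg a + gd a * (1/2 + (N - 1) * y0 - N * a)" by (simp add: algebra_simps)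
        also have "(N - 1) * y0 = 1/2" unfolding y0_def using N by simp
        also have "N * a = 1" unfolding a_def using N by simp
        finally show ?thesis unfolding y0_def by simp
      qed
      finally show ?thesis unfolding N_def a_def by simp
    qed
  qed
qed

lemma OD_uniform_eq:
  assumes c: "c > 0" and pc: "\<forall>i<n. p i = c" and q: "q \<in> Sim n"
  shows "OD n q p = (\<Sum>i<n. gg (q i)) + ln c"
proof -
  have "OD n q p = (\<Sum>i<n. gg (q i) + q i * ln c)"
    unfolding OD_def
  proof (intro sum.cong refl)
    fix i assume i: "i \<in> {..<n}"
    have "q i \<ge> 0" using Sim_props[OF q] i by auto
    thus "(1 - q i) * ln (1 - q i) - q i * ln (q i / p i) = gg (q i) + q i * ln c"
      using pc i c unfolding gg_def by (cases "q i = 0") (auto simp: ln_div algebra_simps)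
  qed
  also have "\<dots> = (\<Sum>i<n. gg (q i)) + ln c"
    using q unfolding Sim_def by (simp add: sum.distrib sum_distrib_right[symmetric])
  finally show ?thesis .
qed




lemma S_gt_other:
  fixes p :: "nat \<Rightarrow> real"
  assumes n3: "n \<ge> 3" and ppos: "\<forall>i<n. p i > 0" and a: "a < n" and b: "b < n" and ab: "a \<noteq> b"
  shows "(\<Sum>i\<in>{..<n} - {a}. p i) > p b"
proof -
  have "0 \<noteq> a \<and> 0 \<noteq> b \<or> 1 \<noteq> a \<and> 1 \<noteq> b \<or> (2::nat) \<noteq> a \<and> 2 \<noteq> b" using ab by arith
  hence "\<exists>c::nat. c \<le> 2 \<and> c \<noteq> a \<and> c \<noteq> b" by (metis le0 one_le_numeral order_refl)
  then obtain c where c0: "c \<le> 2" "c \<noteq> a" "c \<noteq> b" by blast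
  hence c: "c < n" "c \<noteq> a" "c \<noteq> b" using n3 by auto
  have "(\<Sum>i\<in>{..<n} - {a}. p i) = p b + (\<Sum>i\<in>{..<n} - {a} - {b}. p i)"
    using b ab by (subst sum.remove[of _ b]) auto
  moreover have "(\<Sum>i\<in>{..<n} - {a} - {b}. p i) > 0"
    using c ppos by (intro sum_pos) auto
  ultimately show ?thesis by simp
qed

theorem fact5p8:
  fixes n :: nat and p :: "nat \<Rightarrow> real"
  assumes n2: "n \<ge> 2" and ppos: "\<forall>i<n. p i > 0"
  shows
   "(\<forall>j<n. (SUP q\<in>Sim n. OD n q p) = ln (p j) \<longleftrightarrow> p j \<ge> (\<Sum>i\<in>{..<n} - {j}. p i))
    \<and> (n \<ge> 3 \<longrightarrow> card {j. dominant n p j} \<le> 1)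
    \<and> ((\<not> (\<exists>j. dominant n p j)) \<longrightarrow>
         (\<exists>q\<in>Sim n. (\<forall>i<n. q i > 0) \<and> (\<forall>q'\<in>Sim n. OD n q' p \<le> OD n q p)))
    \<and> (\<forall>c::real. c > 0 \<longrightarrow> (\<forall>i<n. p i = c) \<longrightarrow>
         (SUP q\<in>Sim n. OD n q p) = OD n (\<lambda>i. 1 / real n) p
         \<and> OD n (\<lambda>i. 1 / real n) p = (real n - 1) * ln (1 - 1 / real n) + ln (real n) + ln c)"
proof (intro conjI allI impI)
  have bdd: "bdd_above ((\<lambda>q. OD n q p) ` Sim n)" by (rule od_bdd[OF n2 ppos])
  fix j assume j: "j < n"
  have pj: "p j > 0" using ppos j by simp
  define S where "S = (\<Sum>i\<in>{..<n} - {j}. p i)"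
  have S: "S > 0" unfolding S_def by (rule S_pos[OF n2 ppos j])
  show "(SUP q\<in>Sim n. OD n q p) = ln (p j) \<longleftrightarrow> p j \<ge> (\<Sum>i\<in>{..<n} - {j}. p i)"
  proof
    assume eq: "(SUP q\<in>Sim n. OD n q p) = ln (p j)"
    show "p j \<ge> (\<Sum>i\<in>{..<n} - {j}. p i)"
    proof (rule ccontr)
      assume "\<not> ?thesis"
      hence "(\<Sum>i\<in>{..<n} - {j}. p i) > p j" by simp
      from beat_vertex[OF n2 ppos j this] obtain q where q: "q \<in> Sim n" "OD n q p > ln (p j)" by blast
      have "OD n q p \<le> (SUP q\<in>Sim n. OD n q p)" by (rule cSUP_upper[OF q(1) bdd])
      thus False using eq q(2) by simp
    qed
  next
    assume dom: "p j \<ge> (\<Sum>i\<in>{..<n} - {j}. p i)"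
    show "(SUP q\<in>Sim n. OD n q p) = ln (p j)"
    proof (rule cSup_eq_maximum)
      show "ln (p j) \<in> (\<lambda>q. OD n q p) ` Sim n"
        using vtx_Sim[OF j] vtx_OD[of j n p, OF j pj] by force
    next
      fix y assume "y \<in> (\<lambda>q. OD n q p) ` Sim n"
      then obtain q where q: "q \<in> Sim n" "y = OD n q p" by blast
      have b: "0 \<le> q j" "q j \<le> 1" using Sim_props[OF q(1) j] by auto
      have "ln S \<le> ln (p j)" using S dom unfolding S_def by simp
      hence "(1 - q j) * ln S \<le> (1 - q j) * ln (p j)" using b by (intro mult_left_mono) auto
      moreover have "OD n q p \<le> q j * ln (p j) + (1 - q j) * ln S"
        using od_bound[OF n2 ppos q(1) j] unfolding S_def .
      ultimately have "OD n q p \<le> q j * ln (p j) + (1 - q j) * ln (p j)" by linarith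
      thus "y \<le> ln (p j)" using q(2) by (simp add: algebra_simps)
    qed
  qed
next
  assume n3: "n \<ge> 3"
  have fin: "finite {j. dominant n p j}"
    by (rule finite_subset[of _ "{..<n}"]) (auto simp: dominant_def)
  have "\<forall>a\<in>{j. dominant n p j}. \<forall>b\<in>{j. dominant n p j}. a = b"
  proof (intro ballI, rule ccontr)
    fix a b assume a: "a \<in> {j. dominant n p j}" and b: "b \<in> {j. dominant n p j}" and ab: "a \<noteq> b"
    have an: "a < n" "p a \<ge> (\<Sum>i\<in>{..<n} - {a}. p i)" using a unfolding dominant_def by auto
    have bn: "b < n" "p b \<ge> (\<Sum>i\<in>{..<n} - {b}. p i)" using b unfolding dominant_def by auto
    have "(\<Sum>i\<in>{..<n} - {a}. p i) > p b" by (rule S_gt_other[OF n3 ppos an(1) bn(1) ab])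
    moreover have "(\<Sum>i\<in>{..<n} - {b}. p i) > p a" using ab by (intro S_gt_other[OF n3 ppos bn(1) an(1)]) auto
    ultimately show False using an(2) bn(2) by linarith
  qed
  thus "card {j. dominant n p j} \<le> 1" using card_le_Suc0_iff_eq[OF fin] by simp
next
  assume "\<not> (\<exists>j. dominant n p j)"
  thus "\<exists>q\<in>Sim n. (\<forall>i<n. q i > 0) \<and> (\<forall>q'\<in>Sim n. OD n q' p \<le> OD n q p)"
    by (rule interior_max[OF n2 ppos])
next
  fix c :: real assume c: "c > 0" and pc: "\<forall>i<n. p i = c"
  define u where "u = (\<lambda>i::nat. 1 / real n)"
  have N: "real n \<ge> 2" using n2 by simp
  have uS: "u \<in> Sim n" unfolding u_def Sim_def using N by simp
  have ODu: "OD n u p = real n * gg (1 / real n) + ln c"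
    using OD_uniform_eq[OF c pc uS] unfolding u_def by simp
  show "(SUP q\<in>Sim n. OD n q p) = OD n (\<lambda>i. 1 / real n) p"
    unfolding u_def[symmetric]
  proof (rule cSup_eq_maximum)
    show "OD n u p \<in> (\<lambda>q. OD n q p) ` Sim n" using uS by blast
  next
    fix y assume "y \<in> (\<lambda>q. OD n q p) ` Sim n"
    then obtain q where q: "q \<in> Sim n" "y = OD n q p" by blast
    show "y \<le> OD n u p"
      using q OD_uniform_eq[OF c pc q(1)] uniform_ineq[OF n2 q(1)] ODu by simp
  qed
  have "real n * gg (1 / real n) = (real n - 1) * ln (1 - 1 / real n) + ln (real n)"
  proof -
    have "real n * gg (1 / real n) = (real n * (1 - 1 / real n)) * ln (1 - 1 / real n) - (real n * (1 / real n)) * ln (1 / real n)"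
      unfolding gg_def by (simp add: algebra_simps)
    also have "real n * (1 - 1 / real n) = real n - 1" using N by (simp add: field_simps)
    also have "real n * (1 / real n) = 1" using N by simp
    also have "ln (1 / real n) = - ln (real n)" using N by (simp add: ln_div)
    finally show ?thesis by simp
  qed
  thus "OD n (\<lambda>i. 1 / real n) p = (real n - 1) * ln (1 - 1 / real n) + ln (real n) + ln c"
    using ODu unfolding u_def by simp
qed


end
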